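(* Let $n\ge1$ and $1\le k\le\frac{\ln n}{3}$. Then any deterministic algorithm that sorts $n$ elements in $k$ rounds in the rank query model uses, on its worst-case input, at least $\frac{k}{3e}\,n^{1+1/k}$ queries.
   Context: Rank query model: items $x_1,\ldots,x_n$ whose ranks form an unknown permutation of $\{1,\ldots,n\}$; a query asks "How is $\mathrm{rank}(x_i)$ compared to $m$?" with answer "$<$", "$=$" or "$>$"; sorting means determining all ranks. An algorithm runs in $k$ rounds if in each of $k$ rounds it submits a set of queries chosen depending only on answers of earlier rounds, then receives all answers. *)

theory Defs
  imports Complex_Main
begin

text \<open>Items are indexed 0..n-1; an input is a rank assignment
  rank :: nat => nat which is a bijection from {0..<n} onto {1..n}
  (and 0 outside the index range, so that inputs are determined by their
  values on the items).\<close>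

datatype answer = Lt | Eq | Gt

type_synonym query = "nat \<times> nat"

definition valid_input :: "nat \<Rightarrow> (nat \<Rightarrow> nat) \<Rightarrow> bool" where
  "valid_input n rank \<longleftrightarrow> bij_betw rank {..<n} {1..n} \<and> (\<forall>i\<ge>n. rank i = 0)"

definition ans :: "(nat \<Rightarrow> nat) \<Rightarrow> query \<Rightarrow> answer" where
  "ans rank q = (if rank (fst q) < snd q then Lt
                 else if rank (fst q) = snd q then Eq else Gt)"

text \<open>A deterministic multi-round algorithm: in round j it submits the query set
  alg j H, where H is the set of (query, answer) pairs received in earlier rounds.
  hist alg rank j is the information available at the start of round j.\<close>

type_synonym algorithm = "nat \<Rightarrow> (query \<times> answer) set \<Rightarrow> query set"

fun hist :: "algorithm \<Rightarrow> (nat \<Rightarrow> nat) \<Rightarrow> nat \<Rightarrow> (query \<times> answer) set" where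
  "hist alg rank 0 = {}"
| "hist alg rank (Suc j) =
     hist alg rank j \<union> (\<lambda>q. (q, ans rank q)) ` alg j (hist alg rank j)"

definition round_queries :: "algorithm \<Rightarrow> (nat \<Rightarrow> nat) \<Rightarrow> nat \<Rightarrow> query set" where
  "round_queries alg rank j = alg j (hist alg rank j)"

definition sorts_in_rounds :: "nat \<Rightarrow> nat \<Rightarrow> algorithm \<Rightarrow> bool" where
  "sorts_in_rounds n k alg \<longleftrightarrow>
     (\<forall>rank. valid_input n rank \<longrightarrow> (\<forall>j<k. finite (round_queries alg rank j))) \<and>
     (\<exists>out :: (query \<times> answer) set \<Rightarrow> nat \<Rightarrow> nat.
        \<forall>rank. valid_input n rank \<longrightarrow> (\<forall>i<n. out (hist alg rank k) i = rank i))"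

definition num_queries :: "algorithm \<Rightarrow> nat \<Rightarrow> (nat \<Rightarrow> nat) \<Rightarrow> nat" where
  "num_queries alg k rank = (\<Sum>j<k. card (round_queries alg rank j))"

end

theory Submission
  imports Defs "HOL-Combinatorics.Permutations"
begin

definition cmpf :: "nat \<Rightarrow> nat \<Rightarrow> answer" where
  "cmpf r m = (if r < m then Lt else if r = m then Eq else Gt)"

lemma cmpf_lt_aux:
  assumes "finite M" "r < r'" "card {m\<in>M. m<r} = card {m\<in>M. m<r'}" "(r\<in>M) = (r'\<in>M)" "m \<in> M"
  shows "cmpf r m = cmpf r' m"
proof -
  have sub: "{m\<in>M. m<r} \<subseteq> {m\<in>M. m<r'}" using assms(2) by auto
  have eq: "{m\<in>M. m<r} = {m\<in>M. m<r'}"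
    using card_subset_eq[OF _ sub] assms(1,3) by auto
  have "r \<notin> M"
  proof
    assume "r \<in> M" then have "r \<in> {m\<in>M. m<r'}" using assms(2) by auto
    then show False using eq by auto
  qed
  then have "r' \<notin> M" using assms(4) by auto
  have "m < r' \<longleftrightarrow> m < r" using eq assms(5) by blast
  then show ?thesis unfolding cmpf_def using \<open>r \<notin> M\<close> \<open>r' \<notin> M\<close> assms(5) by auto
qed

lemma cmpf_det:
  assumes "finite M" "card {m\<in>M. m<r} = card {m\<in>M. m<r'}" "(r\<in>M) = (r'\<in>M)" "m \<in> M"
  shows "cmpf r m = cmpf r' m"
proof (cases r r' rule: linorder_cases)
  case less then show ?thesis using cmpf_lt_aux assms by blast
next
  case equal then show ?thesis by simp
next
  case greater then show ?thesis using cmpf_lt_aux[of M r' r m] assms by auto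
qed

lemma card_image_factor:
  assumes "\<And>r r'. g r = g r' \<Longrightarrow> f r = f r'" "finite (g ` A)"
  shows "finite (f ` A) \<and> card (f ` A) \<le> card (g ` A)"
proof -
  have sub: "f ` A \<subseteq> (\<lambda>p. f (inv_into A g p)) ` (g ` A)"
  proof
    fix y assume "y \<in> f ` A"
    then obtain r where r: "r \<in> A" "y = f r" by blast
    have "g (inv_into A g (g r)) = g r" using r(1) by (rule f_inv_into_f[OF imageI])
    then have "f (inv_into A g (g r)) = f r" by (rule assms(1))
    then show "y \<in> (\<lambda>p. f (inv_into A g p)) ` (g ` A)"
      by (intro rev_image_eqI[of "g r"]) (use r in auto)
  qed
  have f2: "finite ((\<lambda>p. f (inv_into A g p)) ` (g ` A))" using assms(2) by blast
  have c2: "card ((\<lambda>p. f (inv_into A g p)) ` (g ` A)) \<le> card (g ` A)"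
    using assms(2) by (rule card_image_le)
  have "finite (f ` A)" using sub f2 by (rule finite_subset)
  moreover have "card (f ` A) \<le> card ((\<lambda>p. f (inv_into A g p)) ` (g ` A))"
    using sub f2 by (rule card_mono[rotated])
  ultimately show ?thesis using c2 by linarith
qed

lemma V_image:
  assumes "finite M"
  shows "finite ((\<lambda>r. \<lambda>m. if m \<in> M then cmpf r m else Lt) ` UNIV)
     \<and> card ((\<lambda>r. \<lambda>m. if m \<in> M then cmpf r m else Lt) ` UNIV) \<le> 2 * card M + 1"
proof -
  define g where "g r = (card {m\<in>M. m<r}, r \<in> M)" for r
  define G where "G = ({..card M} \<times> {False}) \<union> ({..<card M} \<times> {True})"
  have gG: "g ` UNIV \<subseteq> G"
  proof
    fix p assume "p \<in> g ` UNIV"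
    then obtain r where p: "p = g r" by auto
    have c1: "card {m\<in>M. m<r} \<le> card M" using assms by (intro card_mono) auto
    have "r \<in> M \<Longrightarrow> card {m\<in>M. m<r} < card M"
      using assms by (intro psubset_card_mono) auto
    then show "p \<in> G" using c1 unfolding p g_def G_def by auto
  qed
  have finG: "finite G" unfolding G_def by auto
  have cG: "card G = 2 * card M + 1"
    unfolding G_def by (subst card_Un_disjoint) auto
  have fg: "finite (g ` UNIV)" using gG finG finite_subset by blast
  have cg: "card (g ` UNIV) \<le> card G" using gG finG card_mono by blast
  have det: "\<And>r r'. g r = g r' \<Longrightarrow> (\<lambda>m. if m \<in> M then cmpf r m else Lt) = (\<lambda>m. if m \<in> M then cmpf r' m else Lt)"
  proof -
    fix r r' assume "g r = g r'"
    then have "card {m\<in>M. m<r} = card {m\<in>M. m<r'}" "(r\<in>M) = (r'\<in>M)" unfolding g_def by simp_all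
    then show "(\<lambda>m. if m \<in> M then cmpf r m else Lt) = (\<lambda>m. if m \<in> M then cmpf r' m else Lt)"
    proof (intro ext)
      fix m
      show "(if m \<in> M then cmpf r m else Lt) = (if m \<in> M then cmpf r' m else Lt)"
      proof (cases "m \<in> M")
        case True
        then show ?thesis using cmpf_det[OF assms \<open>card {m\<in>M. m<r} = card {m\<in>M. m<r'}\<close> \<open>(r\<in>M) = (r'\<in>M)\<close> True] by simp
      qed simp
    qed
  qed
  have "finite ((\<lambda>r. \<lambda>m. if m \<in> M then cmpf r m else Lt) ` UNIV) \<and>
     card ((\<lambda>r. \<lambda>m. if m \<in> M then cmpf r m else Lt) ` UNIV) \<le> card (g ` UNIV)"
    by (rule card_image_factor[OF det fg])
  then show ?thesis using cg cG by linarith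
qed


definition qset :: "query set \<Rightarrow> nat \<Rightarrow> nat set" where
  "qset Q x = {m. (x, m) \<in> Q}"

definition Vf :: "query set \<Rightarrow> nat \<Rightarrow> nat \<Rightarrow> nat \<Rightarrow> answer" where
  "Vf Q x r = (\<lambda>m. if m \<in> qset Q x then cmpf r m else Lt)"

definition Pw :: "nat \<Rightarrow> query set \<Rightarrow> nat" where
  "Pw n Q = (\<Prod>x<n. 2 * card (qset Q x) + 1)"

definition Wt :: "algorithm \<Rightarrow> nat \<Rightarrow> nat \<Rightarrow> nat \<Rightarrow> (nat \<Rightarrow> nat) \<Rightarrow> nat" where
  "Wt alg n k j rank = (\<Prod>j'\<in>{j..<k}. Pw n (alg j' (hist alg rank j')))"

lemma finite_qset: "finite Q \<Longrightarrow> finite (qset Q x)"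
proof -
  assume "finite Q"
  have "qset Q x \<subseteq> snd ` Q" unfolding qset_def by force
  then show ?thesis using \<open>finite Q\<close> finite_subset by blast
qed

lemma Pw_pos: "Pw n Q \<ge> 1"
  unfolding Pw_def by (intro prod_ge_1) auto

lemma keys_bound:
  assumes "finite Q" "T \<subseteq> Collect (valid_input n)"
  shows "finite ((\<lambda>\<sigma> x. Vf Q x (\<sigma> x)) ` T) \<and> card ((\<lambda>\<sigma> x. Vf Q x (\<sigma> x)) ` T) \<le> Pw n Q"
proof -
  define Z where "Z = (\<Pi>\<^sub>E x \<in> {..<n}. range (Vf Q x))"
  define ext where "ext g = (\<lambda>x. if x < n then g x else Vf Q x 0)" for g :: "nat \<Rightarrow> nat \<Rightarrow> answer"
  have VI: "finite (range (Vf Q x)) \<and> card (range (Vf Q x)) \<le> 2 * card (qset Q x) + 1" for x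
    using V_image[OF finite_qset[OF assms(1)], of x] unfolding Vf_def by simp
  have finZ: "finite Z" unfolding Z_def using VI by (intro finite_PiE) auto
  have cZ: "card Z \<le> Pw n Q"
  proof -
    have "card Z = (\<Prod>x<n. card (range (Vf Q x)))" unfolding Z_def by (rule card_PiE) simp
    also have "\<dots> \<le> (\<Prod>x<n. 2 * card (qset Q x) + 1)"
      by (rule prod_mono) (use VI in blast)
    finally show ?thesis unfolding Pw_def .
  qed
  have sub: "(\<lambda>\<sigma> x. Vf Q x (\<sigma> x)) ` T \<subseteq> ext ` Z"
  proof
    fix f assume "f \<in> (\<lambda>\<sigma> x. Vf Q x (\<sigma> x)) ` T"
    then obtain \<sigma> where s: "\<sigma> \<in> T" "f = (\<lambda>x. Vf Q x (\<sigma> x))" by auto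
    have v: "\<forall>i\<ge>n. \<sigma> i = 0" using s(1) assms(2) unfolding valid_input_def by auto
    have "f = ext (restrict (\<lambda>x. Vf Q x (\<sigma> x)) {..<n})"
      unfolding s ext_def using v by (auto simp: fun_eq_iff)
    moreover have "restrict (\<lambda>x. Vf Q x (\<sigma> x)) {..<n} \<in> Z" unfolding Z_def by auto
    ultimately show "f \<in> ext ` Z" by auto
  qed
  have "finite (ext ` Z)" using finZ by auto
  moreover have "card (ext ` Z) \<le> card Z" using finZ card_image_le by auto
  ultimately have "finite ((\<lambda>\<sigma> x. Vf Q x (\<sigma> x)) ` T)" "card ((\<lambda>\<sigma> x. Vf Q x (\<sigma> x)) ` T) \<le> card (ext ` Z)"
    using sub finite_subset card_mono by blast+
  then show ?thesis using cZ \<open>card (ext ` Z) \<le> card Z\<close> by linarith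
qed

lemma count_main:
  assumes fin: "\<And>rank j. valid_input n rank \<Longrightarrow> j < k \<Longrightarrow> finite (alg j (hist alg rank j))"
  shows "j + d = k \<Longrightarrow> T \<subseteq> Collect (valid_input n) \<Longrightarrow>
    (\<forall>\<sigma>\<in>T. \<forall>\<tau>\<in>T. hist alg \<sigma> j = hist alg \<tau> j) \<Longrightarrow> 0 \<le> M \<Longrightarrow>
    (\<forall>\<sigma>\<in>T. real (Wt alg n k j \<sigma>) \<le> M) \<Longrightarrow> real (card ((\<lambda>\<sigma>. hist alg \<sigma> k) ` T)) \<le> M"
proof (induction d arbitrary: j T M)
  case 0
  show ?case
  proof (cases "T = {}")
    case True then show ?thesis using 0(4) by simp
  next
    case False
    then obtain \<sigma>0 where s0: "\<sigma>0 \<in> T" by auto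
    have "(\<lambda>\<sigma>. hist alg \<sigma> k) ` T = {hist alg \<sigma>0 k}"
    proof -
      have "\<forall>\<sigma>\<in>T. hist alg \<sigma> k = hist alg \<sigma>0 k" using 0(3) s0 unfolding 0(1)[simplified, symmetric] by blast
      then show ?thesis using s0 by blast
    qed
    moreover have "Wt alg n k j \<sigma>0 = 1" using 0(1) unfolding Wt_def by simp
    ultimately show ?thesis using 0(4,5) s0 by fastforce
  qed
next
  case (Suc d)
  show ?case
  proof (cases "T = {}")
    case True then show ?thesis using Suc.prems(4) by simp
  next
    case False
    then obtain \<sigma>0 where s0: "\<sigma>0 \<in> T" by auto
    define Q where "Q = alg j (hist alg \<sigma>0 j)"
    have jk: "j < k" using Suc.prems(1) by simp
    have hQ: "alg j (hist alg \<sigma> j) = Q" if "\<sigma> \<in> T" for \<sigma>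
    proof -
      have "hist alg \<sigma> j = hist alg \<sigma>0 j" using Suc.prems(3) that s0 by blast
      then show ?thesis unfolding Q_def by simp
    qed
    have finQ: "finite Q" unfolding Q_def using fin[OF _ jk] s0 Suc.prems(2) by auto
    define F where "F \<sigma> = (\<lambda>x. Vf Q x (\<sigma> x))" for \<sigma> :: "nat \<Rightarrow> nat"
    have ansF: "ans \<sigma> q = F \<sigma> (fst q) (snd q)" if "q \<in> Q" for \<sigma> q
      using that unfolding F_def Vf_def qset_def cmpf_def ans_def by auto
    have hS: "hist alg \<sigma> (Suc j) = hist alg \<sigma>0 j \<union> (\<lambda>q. (q, ans \<sigma> q)) ` Q" if "\<sigma> \<in> T" for \<sigma>
    proof -
      have "hist alg \<sigma> j = hist alg \<sigma>0 j" using Suc.prems(3) that s0 by blast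
      then show ?thesis using hQ[OF that] by simp
    qed
    define P where "P = Pw n Q"
    have P1: "real P \<ge> 1" unfolding P_def using Pw_pos by simp
    define Tf where "Tf f = {\<sigma>\<in>T. F \<sigma> = f}" for f
    have IH: "real (card ((\<lambda>\<sigma>. hist alg \<sigma> k) ` Tf f)) \<le> M / P" for f
    proof (rule Suc.IH)
      show "Suc j + d = k" using Suc.prems(1) by simp
      show "Tf f \<subseteq> Collect (valid_input n)" using Suc.prems(2) unfolding Tf_def by auto
      show "\<forall>\<sigma>\<in>Tf f. \<forall>\<tau>\<in>Tf f. hist alg \<sigma> (Suc j) = hist alg \<tau> (Suc j)"
      proof (intro ballI)
        fix \<sigma> \<tau> assume a: "\<sigma> \<in> Tf f" "\<tau> \<in> Tf f"
        then have "F \<sigma> = F \<tau>" "\<sigma> \<in> T" "\<tau> \<in> T" unfolding Tf_def by auto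
        then have "(\<lambda>q. (q, ans \<sigma> q)) ` Q = (\<lambda>q. (q, ans \<tau> q)) ` Q"
          using ansF by (intro image_cong) auto
        then show "hist alg \<sigma> (Suc j) = hist alg \<tau> (Suc j)"
          using hS \<open>\<sigma> \<in> T\<close> \<open>\<tau> \<in> T\<close> by simp
      qed
      show "0 \<le> M / real P" using Suc.prems(4) P1 by simp
      show "\<forall>\<sigma>\<in>Tf f. real (Wt alg n k (Suc j) \<sigma>) \<le> M / real P"
      proof
        fix \<sigma> assume "\<sigma> \<in> Tf f"
        then have sT: "\<sigma> \<in> T" unfolding Tf_def by auto
        have "Wt alg n k j \<sigma> = P * Wt alg n k (Suc j) \<sigma>"
          unfolding Wt_def P_def using jk hQ[OF sT] by (subst prod.atLeast_Suc_lessThan[OF jk]) simp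
        then have "real P * real (Wt alg n k (Suc j) \<sigma>) \<le> M"
        proof -
          have "real (Wt alg n k j \<sigma>) \<le> M" using Suc.prems(5) sT by blast
          then show ?thesis using \<open>Wt alg n k j \<sigma> = P * Wt alg n k (Suc j) \<sigma>\<close> by simp
        qed
        then show "real (Wt alg n k (Suc j) \<sigma>) \<le> M / real P"
          using P1 by (simp add: field_simps)
      qed
    qed
    have KB: "finite (F ` T) \<and> card (F ` T) \<le> P"
      unfolding F_def P_def using keys_bound[OF finQ Suc.prems(2)] by simp
    have U: "(\<lambda>\<sigma>. hist alg \<sigma> k) ` T = (\<Union>f\<in>F ` T. (\<lambda>\<sigma>. hist alg \<sigma> k) ` Tf f)"
      unfolding Tf_def by auto
    have "card ((\<lambda>\<sigma>. hist alg \<sigma> k) ` T) \<le> (\<Sum>f\<in>F ` T. card ((\<lambda>\<sigma>. hist alg \<sigma> k) ` Tf f))"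
      unfolding U using KB card_UN_le by blast
    then have "real (card ((\<lambda>\<sigma>. hist alg \<sigma> k) ` T)) \<le> (\<Sum>f\<in>F ` T. real (card ((\<lambda>\<sigma>. hist alg \<sigma> k) ` Tf f)))"
      by (metis of_nat_le_iff of_nat_sum)
    also have "\<dots> \<le> (\<Sum>f\<in>F ` T. M / P)" using IH by (intro sum_mono) auto
    also have "\<dots> = real (card (F ` T)) * (M / P)" by simp
    also have "\<dots> \<le> real P * (M / P)"
      using KB Suc.prems(4) P1 by (intro mult_right_mono) auto
    also have "\<dots> = M" using P1 by simp
    finally show ?thesis .
  qed
qed


lemma prod_bound:
  fixes q :: "'a \<Rightarrow> real"
  assumes fin: "finite I" and nn: "\<forall>i\<in>I. 0 \<le> q i" and sm: "sum q I \<le> real (card I) * a" and a0: "0 \<le> a"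
  shows "(\<Prod>i\<in>I. 1 + 2 * q i) \<le> (1 + 2 * a) ^ card I"
proof -
  define c where "c = 1 + 2 * a"
  have c: "c > 0" unfolding c_def using a0 by simp
  have each: "1 + 2 * q i \<le> c * exp (2 * (q i - a) / c)" for i
  proof -
    have "1 + 2 * (q i - a) / c \<le> exp (2 * (q i - a) / c)" by (rule exp_ge_add_one_self)
    then have "c * (1 + 2 * (q i - a) / c) \<le> c * exp (2 * (q i - a) / c)"
      using c by (intro mult_left_mono) auto
    moreover have "c * (1 + 2 * (q i - a) / c) = 1 + 2 * q i"
      using c unfolding c_def by (simp add: field_simps)
    ultimately show ?thesis by simp
  qed
  have "(\<Prod>i\<in>I. 1 + 2 * q i) \<le> (\<Prod>i\<in>I. c * exp (2 * (q i - a) / c))"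
    by (rule prod_mono) (use each nn in auto)
  also have "\<dots> = c ^ card I * exp (\<Sum>i\<in>I. 2 * (q i - a) / c)"
    by (simp add: prod.distrib exp_sum fin)
  also have "(\<Sum>i\<in>I. 2 * (q i - a) / c) = 2 * (sum q I - real (card I) * a) / c"
    by (simp add: sum_divide_distrib[symmetric] sum_distrib_left[symmetric] sum_subtractf)
  also have "exp (2 * (sum q I - real (card I) * a) / c) \<le> 1"
    using sm c by (simp add: divide_nonpos_pos)
  then have "c ^ card I * exp (2 * (sum q I - real (card I) * a) / c) \<le> c ^ card I"
    using c by (intro mult_left_le) auto
  finally show ?thesis unfolding c_def .
qed

lemma fact_lb: "(real n / exp 1) ^ n \<le> fact n"
proof -
  have s: "(\<lambda>i. real n ^ i / fact i) sums exp (real n)"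
    using exp_converges[of "real n"] by (simp add: divide_inverse mult.commute)
  have "sum (\<lambda>i. real n ^ i / fact i) {n} \<le> suminf (\<lambda>i. real n ^ i / fact i)"
    by (rule sum_le_suminf) (use s in \<open>auto simp: sums_iff\<close>)
  then have "real n ^ n / fact n \<le> exp (real n)" using s by (simp add: sums_iff)
  also have "exp (real n) = exp 1 ^ n" using exp_of_nat_mult[of n "1::real"] by simp
  finally have "real n ^ n \<le> fact n * exp 1 ^ n" by (simp add: field_simps)
  then show ?thesis by (simp add: power_divide field_simps)
qed

lemma sum_qset_le: "finite Q \<Longrightarrow> (\<Sum>x<n. card (qset Q x)) \<le> card Q"
proof -
  assume fQ: "finite Q"
  have "(\<Sum>x<n. card (qset Q x)) = card (Sigma {..<n} (qset Q))"
    using finite_qset[OF fQ] by simp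
  also have "Sigma {..<n} (qset Q) \<subseteq> Q" unfolding qset_def by auto
  then have "card (Sigma {..<n} (qset Q)) \<le> card Q" using fQ by (rule card_mono[rotated])
  finally show ?thesis .
qed

lemma e_lower: "exp (1::real) \<ge> 5 / 2"
proof -
  have "exp (1::real) = exp (1/8) ^ 8" using exp_of_nat_mult[of 8 "1/8::real"] by simp
  moreover have "(9/8::real) \<le> exp (1/8)" using exp_ge_add_one_self[of "1/8::real"] by simp
  then have h1: "(9/8::real) ^ 8 \<le> exp (1/8) ^ 8" by (rule power_mono) simp
  have h2: "(5/2::real) \<le> (9/8) ^ 8" by (simp add: power_divide)
  ultimately show ?thesis using h1 h2 by linarith
qed

lemma e_upper: "exp (1::real) < 3"
proof -
  have "(7/8::real) \<le> exp (-(1/8))" using exp_minus_ge[of "1/8::real"] by simp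
  then have "exp (1/8::real) \<le> 8/7" by (simp add: exp_minus field_simps)
  then have "exp (1/8::real) ^ 8 \<le> (8/7) ^ 8" by (rule power_mono) simp
  moreover have "exp (1::real) = exp (1/8) ^ 8" using exp_of_nat_mult[of 8 "1/8::real"] by simp
  moreover have "(8/7::real) ^ 8 < 3" by (simp add: power_divide)
  ultimately show ?thesis by linarith
qed

lemma final_ineq:
  fixes n k :: nat
  assumes n1: "n \<ge> 1" and k1: "k \<ge> 1" and kl: "real k \<le> ln (real n) / 3"
  defines "N \<equiv> real n powr (1 / real k)"
  shows "(1 + 2 * (N / (3 * exp 1))) ^ (k * n) < (real n / exp 1) ^ n"
proof -
  have npos: "real n > 0" using n1 by simp
  have NK: "N ^ k = real n"
  proof -
    have Np: "N > 0" unfolding N_def using npos by simp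
    have "N ^ k = N powr real k" using powr_realpow[OF Np] by simp
    also have "\<dots> = real n" unfolding N_def using k1 by (simp add: powr_powr)
    finally show ?thesis .
  qed
  have N3: "N \<ge> exp 3"
  proof -
    have "ln (real n) / real k \<ge> 3" using kl k1 by (simp add: field_simps)
    then have "exp 3 \<le> exp (ln (real n) / real k)" by simp
    also have "\<dots> = N" unfolding N_def powr_def using npos by simp
    finally show ?thesis .
  qed
  define e where "e = exp (1::real)"
  have e1: "e \<ge> 5/2" unfolding e_def by (rule e_lower)
  have e2: "e < 3" unfolding e_def by (rule e_upper)
  have e3: "exp 3 = e ^ 3" unfolding e_def using exp_of_nat_mult[of 3 "1::real"] by simp
  have Ne: "N \<ge> e ^ 3" using N3 e3 by simp
  have "e ^ 2 * (e - 2) \<ge> (5/2) ^ 2 * (1/2)"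
    by (rule mult_mono) (use e1 in \<open>auto intro: power_mono\<close>)
  then have ee: "e ^ 2 * (e - 2) \<ge> 3" by (simp add: power_divide)
  have kk1: "e ^ 3 * (e - 2) \<le> N * (e - 2)" using Ne e1 by (intro mult_right_mono) auto
  have kk2: "e ^ 3 * (e - 2) = e * (e ^ 2 * (e - 2))" by (simp add: power2_eq_square power3_eq_cube)
  have kk3: "e * 3 \<le> e * (e ^ 2 * (e - 2))" using ee e1 by (intro mult_left_mono) auto
  have key: "N * (e - 2) \<ge> 3 * e" using kk1 kk2 kk3 by linarith
  have "0 < e ^ 3" using e1 by simp
  then have Npos: "N > 0" using Ne by linarith
  have b1: "1 + 2 * (N / (3 * e)) \<le> N / 3"
  proof -
    have ep: "e > 0" using e1 by simp
    have "1 + 2 * (N / (3 * e)) = (3 * e + 2 * N) / (3 * e)" using ep by (simp add: field_simps)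
    also have "\<dots> \<le> (N * e) / (3 * e)" using key ep by (intro divide_right_mono) (auto simp: algebra_simps)
    also have "\<dots> = N / 3" using ep by simp
    finally show ?thesis .
  qed
  have b0: "0 \<le> 1 + 2 * (N / (3 * e))" using Npos e1 by simp
  have "(1 + 2 * (N / (3 * e))) ^ k \<le> (N / 3) ^ k" using b1 b0 by (rule power_mono)
  also have "\<dots> = N ^ k / 3 ^ k" by (simp add: power_divide)
  also have "\<dots> \<le> N ^ k / 3"
  proof -
    have "(3::real) ^ 1 \<le> 3 ^ k" using k1 by (intro power_increasing) auto
    then have "(3::real) \<le> 3 ^ k" by simp
    then show ?thesis using NK npos by (intro divide_left_mono) auto
  qed
  also have "\<dots> < real n / e"
  proof -
    have ep: "e > 0" using e1 by simp
    have "N ^ k / 3 = real n / 3" using NK by simp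
    also have "\<dots> < real n / e" using npos ep e2 by (intro divide_strict_left_mono) auto
    finally show ?thesis .
  qed
  finally have lt: "(1 + 2 * (N / (3 * e))) ^ k < real n / e" .
  have "(1 + 2 * (N / (3 * e))) ^ (k * n) = ((1 + 2 * (N / (3 * e))) ^ k) ^ n"
    by (simp add: power_mult)
  also have "\<dots> < (real n / e) ^ n"
    using lt b0 n1 by (intro power_strict_mono) auto
  finally show ?thesis unfolding e_def .
qed

theorem corollary1:
  fixes n k :: nat and alg :: algorithm
  assumes "n \<ge> 1" and "k \<ge> 1" and "real k \<le> ln (real n) / 3"
    and "sorts_in_rounds n k alg"
  shows "\<exists>rank. valid_input n rank \<and>
           real (num_queries alg k rank) \<ge> real k / (3 * exp 1) * real n powr (1 + 1 / real k)"
proof (rule ccontr)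
  assume neg: "\<not> ?thesis"
  define tgt where "tgt = real k / (3 * exp 1) * real n powr (1 + 1 / real k)"
  have lt: "real (num_queries alg k rank) < tgt" if "valid_input n rank" for rank
    using neg that unfolding tgt_def by fastforce
  have fin: "\<And>rank j. valid_input n rank \<Longrightarrow> j < k \<Longrightarrow> finite (alg j (hist alg rank j))"
    using assms(4) unfolding sorts_in_rounds_def round_queries_def by blast
  obtain out where out: "\<And>rank i. valid_input n rank \<Longrightarrow> i < n \<Longrightarrow> out (hist alg rank k) i = rank i"
    using assms(4) unfolding sorts_in_rounds_def by blast
  define emb where "emb p = (\<lambda>i. if i < n then Suc (p i) else 0)" for p :: "nat \<Rightarrow> nat"
  define PS where "PS = {p. p permutes {..<n}}"
  define T0 where "T0 = emb ` PS"
  have valid: "valid_input n (emb p)" if "p \<in> PS" for p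
  proof -
    have pp: "p permutes {..<n}" using that unfolding PS_def by simp
    have "inj_on (emb p) {..<n}"
      using permutes_inj[OF pp] unfolding emb_def inj_on_def by (auto dest: injD)
    moreover have "emb p ` {..<n} = {1..n}"
    proof -
      have "emb p ` {..<n} = Suc ` (p ` {..<n})" unfolding emb_def by auto
      also have "\<dots> = Suc ` {..<n}" using permutes_image[OF pp] by simp
      also have "\<dots> = {1..n}" by (simp add: image_Suc_lessThan)
      finally show ?thesis .
    qed
    ultimately show ?thesis unfolding valid_input_def bij_betw_def emb_def by auto
  qed
  have T0v: "T0 \<subseteq> Collect (valid_input n)" unfolding T0_def using valid by auto
  have inj_emb: "inj_on emb PS"
  proof (rule inj_onI)
    fix p p' assume a: "p \<in> PS" "p' \<in> PS" "emb p = emb p'"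
    show "p = p'"
    proof
      fix x
      show "p x = p' x"
      proof (cases "x < n")
        case True
        then show ?thesis using fun_cong[OF a(3), of x] unfolding emb_def by simp
      next
        case False
        then show ?thesis using a(1,2) unfolding PS_def by (simp add: permutes_not_in)
      qed
    qed
  qed
  have finPS: "finite PS" unfolding PS_def by (rule finite_permutations) simp
  have cT0: "card T0 = fact n"
    unfolding T0_def using card_image[OF inj_emb] card_permutations[of "{..<n}" n] unfolding PS_def by simp
  have inj_h: "inj_on (\<lambda>\<sigma>. hist alg \<sigma> k) T0"
  proof (rule inj_onI)
    fix \<sigma> \<tau> assume a: "\<sigma> \<in> T0" "\<tau> \<in> T0" "hist alg \<sigma> k = hist alg \<tau> k"
    have v: "valid_input n \<sigma>" "valid_input n \<tau>" using a(1,2) T0v by auto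
    show "\<sigma> = \<tau>"
    proof
      fix i
      show "\<sigma> i = \<tau> i"
      proof (cases "i < n")
        case True
        then show ?thesis using out[OF v(1) True] out[OF v(2) True] a(3) by simp
      next
        case False
        then show ?thesis using v unfolding valid_input_def by simp
      qed
    qed
  qed
  define N where "N = real n powr (1 / real k)"
  define a where "a = N / (3 * exp 1)"
  have a0: "0 \<le> a" unfolding a_def N_def by simp
  have tgt_eq: "tgt = real (card ({..<k} \<times> {..<n})) * a"
  proof -
    have "real n powr (1 + 1 / real k) = real n * N"
      unfolding N_def using assms(1) by (simp add: powr_add)
    then show ?thesis unfolding tgt_def a_def by simp
  qed
  have W: "real (Wt alg n k 0 \<sigma>) \<le> (1 + 2 * a) ^ (k * n)" if "\<sigma> \<in> T0" for \<sigma>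
  proof -
    have v: "valid_input n \<sigma>" using that T0v by auto
    define qq where "qq = (\<lambda>(j, x). real (card (qset (alg j (hist alg \<sigma> j)) x)))"
    have "real (Wt alg n k 0 \<sigma>) = (\<Prod>j<k. \<Prod>x<n. 1 + 2 * qq (j, x))"
      unfolding Wt_def Pw_def qq_def by (simp add: atLeast0LessThan)
    also have "\<dots> = (\<Prod>p\<in>{..<k} \<times> {..<n}. 1 + 2 * qq p)"
      by (simp add: prod.cartesian_product)
    also have "\<dots> \<le> (1 + 2 * a) ^ card ({..<k} \<times> {..<n})"
    proof (rule prod_bound)
      show "finite ({..<k} \<times> {..<n})" by simp
      show "\<forall>i\<in>{..<k} \<times> {..<n}. 0 \<le> qq i" unfolding qq_def by auto
      show "0 \<le> a" by (rule a0)
      have "sum qq ({..<k} \<times> {..<n}) = (\<Sum>j<k. \<Sum>x<n. qq (j, x))"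
        by (simp add: sum.cartesian_product)
      also have "\<dots> \<le> (\<Sum>j<k. real (card (alg j (hist alg \<sigma> j))))"
      proof (rule sum_mono)
        fix j assume "j \<in> {..<k}"
        then have "finite (alg j (hist alg \<sigma> j))" using fin v by simp
        then have "(\<Sum>x<n. card (qset (alg j (hist alg \<sigma> j)) x)) \<le> card (alg j (hist alg \<sigma> j))"
          by (rule sum_qset_le)
        then show "(\<Sum>x<n. qq (j, x)) \<le> real (card (alg j (hist alg \<sigma> j)))"
          unfolding qq_def by (metis (mono_tags, lifting) of_nat_le_iff of_nat_sum case_prod_conv sum.cong)
      qed
      also have "\<dots> = real (num_queries alg k \<sigma>)"
        unfolding num_queries_def round_queries_def by simp
      also have "\<dots> \<le> tgt" using lt[OF v] by simp
      finally show "sum qq ({..<k} \<times> {..<n}) \<le> real (card ({..<k} \<times> {..<n})) * a"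
        using tgt_eq by simp
    qed
    also have "card ({..<k} \<times> {..<n}) = k * n" by simp
    finally show ?thesis .
  qed
  have "real (card ((\<lambda>\<sigma>. hist alg \<sigma> k) ` T0)) \<le> (1 + 2 * a) ^ (k * n)"
  proof (rule count_main[where j=0 and d=k])
    show "\<And>rk j. valid_input n rk \<Longrightarrow> j < k \<Longrightarrow> finite (alg j (hist alg rk j))" using fin by blast
    show "0 + k = k" by simp
    show "T0 \<subseteq> Collect (valid_input n)" by (rule T0v)
    show "\<forall>\<sigma>\<in>T0. \<forall>\<tau>\<in>T0. hist alg \<sigma> 0 = hist alg \<tau> 0" by simp
    show "0 \<le> (1 + 2 * a) ^ (k * n)" using a0 by simp
    show "\<forall>\<sigma>\<in>T0. real (Wt alg n k 0 \<sigma>) \<le> (1 + 2 * a) ^ (k * n)" using W by blast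
  qed
  moreover have "card ((\<lambda>\<sigma>. hist alg \<sigma> k) ` T0) = fact n"
    using card_image[OF inj_h] cT0 by simp
  ultimately have "fact n \<le> (1 + 2 * a) ^ (k * n)" by simp
  moreover have "(1 + 2 * a) ^ (k * n) < (real n / exp 1) ^ n"
    unfolding a_def N_def using final_ineq[OF assms(1-3)] by simp
  moreover have "(real n / exp 1) ^ n \<le> fact n" by (rule fact_lb)
  ultimately show False by simp
qed

end
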